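(* For every integer $n\ge 1$, $(n-1) P_{n-1} P_{n}^2=2 P_{n+1} P_{n}^2+(n-1) P_{2 n} P_{n}+(n+1) P_{n+1} (P_{n+1}^2-P_{2 n+1})$, where $P_k$ denotes the $k$-th Pell number.
   Context: The Pell numbers are defined by $P_0=0$, $P_1=1$, $P_k=2P_{k-1}+P_{k-2}$ for $k\ge 2$. *)

theory Defs
  imports Main
begin

fun pell :: "nat \<Rightarrow> int" where
  "pell 0 = 0"
| "pell (Suc 0) = 1"
| "pell (Suc (Suc k)) = 2 * pell (Suc k) + pell k"

end

theory Submission
  imports Defs
begin
lemma pell_add: "pell (m + n + 1) = pell (m+1) * pell (n+1) + pell m * pell n"
proof (induction n arbitrary: m rule: pell.induct)
  case 1
  then show ?case by simp
next
  case 2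
  then show ?case by (simp add: numeral_2_eq_2)
next
  case (3 k)
  have a: "pell (m + Suc (Suc k) + 1) = 2 * pell (m + Suc k + 1) + pell (m + k + 1)"
    by (metis pell.simps(3) add_Suc_right Suc_eq_plus1)
  have b: "pell (Suc (Suc k) + 1) = 2 * pell (Suc k + 1) + pell (k + 1)"
    by (metis pell.simps(3) Suc_eq_plus1)
  have i1: "pell (m + Suc k + 1) = pell (m+1) * pell (Suc k+1) + pell m * pell (Suc k)" using 3(1) .
  have i2: "pell (m + k + 1) = pell (m+1) * pell (k+1) + pell m * pell k" using 3(2) .
  have c: "pell (Suc (Suc k)) = 2 * pell (Suc k) + pell k" by simp
  show ?case unfolding a b c i1 i2 by (simp only: algebra_simps)
qed

theorem proposition7p5:
  fixes n :: nat
  assumes "n \<ge> 1"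
  shows "(int n - 1) * pell (n - 1) * (pell n)^2 =
         2 * pell (n + 1) * (pell n)^2 + (int n - 1) * pell (2 * n) * pell n
         + (int n + 1) * pell (n + 1) * ((pell (n + 1))^2 - pell (2 * n + 1))"
proof -
  obtain k where k: "n = Suc k" using assms by (cases n) auto
  have e1: "pell (2*n+1) = pell (n+1)^2 + pell n ^2"
    using pell_add[of n n] by (simp only: power2_eq_square mult_2)
  have e2: "pell (2*n) = pell n * (pell (n+1) + pell k)"
  proof -
    have "2*n = k + n + 1" using k by simp
    then show ?thesis using pell_add[of k n] k by (simp only: algebra_simps Suc_eq_plus1)
  qed
  have e3: "pell (n+1) = 2 * pell n + pell k" using k by simp
  have e4: "pell (n - 1) = pell k" using k by simp
  define a where "a = pell (n+1)"
  define b where "b = pell n"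
  define c where "c = pell k"
  have ac: "a = 2*b + c" using e3 a_def b_def c_def by simp
  show ?thesis unfolding e1 e2 e4 a_def[symmetric] b_def[symmetric] c_def[symmetric] ac
    by (simp add: algebra_simps power2_eq_square)
qed
end
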